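(* Let $K\in\mathbb{N}$, $L>0$, and let $p$ be a probability density function on $\mathbb{R}^K$ that is $L$-Lipschitz continuous with respect to the $\ell_1$-norm. Then for all $\mathbf{x}\in\mathbb{R}^K$, \[ p(\mathbf{x})\le\Big(\frac{L^K(K+1)!}{2^K}\Big)^{\frac1{K+1}}. \] *)

theory Defs
  imports "HOL-Analysis.Analysis"
begin

text \<open>The l1 distance on R^K, with K = CARD('n).\<close>
definition l1_dist :: "real ^ 'n \<Rightarrow> real ^ 'n \<Rightarrow> real" where
  "l1_dist x y = (\<Sum>i\<in>UNIV. \<bar>x $ i - y $ i\<bar>)"

definition l1_lipschitz :: "real \<Rightarrow> (real ^ 'n \<Rightarrow> real) \<Rightarrow> bool" where
  "l1_lipschitz L p \<longleftrightarrow> (\<forall>x y. \<bar>p x - p y\<bar> \<le> L * l1_dist x y)"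

definition prob_density :: "(real ^ 'n \<Rightarrow> real) \<Rightarrow> bool" where
  "prob_density p \<longleftrightarrow> (\<forall>x. 0 \<le> p x) \<and> (p has_integral 1) UNIV"

end

theory Submission
  imports Defs
begin


definition G :: "nat \<Rightarrow> real \<Rightarrow> real \<Rightarrow> real" where
  "G n L c = 2 ^ n * (max c 0) ^ (n + 1) / (L ^ n * fact (n + 1))"

lemma G_nonneg: "L > 0 \<Longrightarrow> G n L c \<ge> 0"
  unfolding G_def by (intro divide_nonneg_pos mult_nonneg_nonneg) auto

lemma G_neg: "c \<le> 0 \<Longrightarrow> G n L c = 0"
  unfolding G_def by (simp add: max_def)

lemma dpow: "((\<lambda>y. (a + b*y::real)^(Suc m)) has_real_derivative (real (Suc m) * (a+b*y)^m * b)) (at y within X)"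
proof -
  have "((\<lambda>y. a + b*y) has_real_derivative b) (at y within X)"
    by (auto intro!: derivative_eq_intros)
  from DERIV_power_Suc[OF this, of m] show ?thesis
    by (rule DERIV_cong) (simp add: algebra_simps)
qed

lemma aux0: "L > 0 \<Longrightarrow> m > 0 \<Longrightarrow> k / (L * m) * (m * Q * L) = k * (Q::real)"
  by (simp add: field_simps)

lemma aux_eq: "L > 0 \<Longrightarrow> k / (L * real (n + 2)) * (real (Suc (n+1)) * Q * L) = k * (Q::real)"
proof -
  assume L: "L > 0"
  have m: "real (n+2) > 0" by simp
  have "k / (L * real (n + 2)) * (real (Suc (n+1)) * Q * L) = k / (L * real (n + 2)) * (real (n+2) * Q * L)"
    by (simp only: Suc_eq_plus1 add.assoc one_add_one)
  also have "\<dots> = k * Q" using L m by (simp add: aux0)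
  finally show ?thesis .
qed

lemma one_dim:
  assumes L: "L > 0"
  shows "((\<lambda>y. G n L (c - L * \<bar>y - y0\<bar>)) has_integral G (Suc n) L c) UNIV"
proof (cases "c > 0")
  case False
  then have "\<And>y. G n L (c - L * \<bar>y - y0\<bar>) = 0" using L
    by (intro G_neg) (smt (verit) mult_nonneg_nonneg abs_ge_zero)
  moreover have "G (Suc n) L c = 0" using False by (intro G_neg) simp
  ultimately show ?thesis by simp
next
  case True
  define r where "r = c / L"
  have r: "r > 0" "L * r = c" using L True by (auto simp: r_def)
  define k where "k = 2 ^ n / (L ^ n * fact (n + 1))"
  have Geq: "G n L t = k * t ^ (n+1)" if "t \<ge> 0" for t
    using that by (simp add: G_def k_def max_def)
  define A where "A y = k / (L * real (n + 2)) * ((c - L * y0) + L * y) ^ Suc (n + 1)" for y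
  define B where "B y = - k / (L * real (n + 2)) * ((c + L * y0) + (- L) * y) ^ Suc (n + 1)" for y
  have dA: "(A has_vector_derivative (k * (c - L * (y0 - y)) ^ (n + 1))) (at y within X)" for y X
    unfolding A_def has_real_derivative_iff_has_vector_derivative[symmetric]
    using L by (rule_tac DERIV_cong[OF DERIV_cmult[OF dpow, of "k / (L * real (n + 2))" "c - L * y0" L "n+1" y X]])
     (simp only: aux_eq[OF L], simp add: algebra_simps)
  have dB: "(B has_vector_derivative (k * (c - L * (y - y0)) ^ (n + 1))) (at y within X)" for y X
    unfolding B_def has_real_derivative_iff_has_vector_derivative[symmetric]
    using L by (rule_tac DERIV_cong[OF DERIV_cmult[OF dpow, of "- k / (L * real (n + 2))" "c + L * y0" "- L" "n+1" y X]])
     (simp only: mult_minus_right aux_eq[OF L] minus_mult_left[symmetric] mult_minus_left, simp add: algebra_simps)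
  have I1: "((\<lambda>y. k * (c - L * (y0 - y)) ^ (n + 1)) has_integral (A y0 - A (y0 - r))) {y0 - r..y0}"
    using r by (intro fundamental_theorem_of_calculus dA) auto
  have I2: "((\<lambda>y. k * (c - L * (y - y0)) ^ (n + 1)) has_integral (B (y0 + r) - B y0)) {y0..y0+r}"
    using r by (intro fundamental_theorem_of_calculus dB) auto
  let ?f = "\<lambda>y. G n L (c - L * \<bar>y - y0\<bar>)"
  have J1: "(?f has_integral (A y0 - A (y0 - r))) {y0 - r..y0}"
    apply (rule has_integral_eq[OF _ I1])
    subgoal for y proof -
      assume y: "y \<in> {y0 - r..y0}"
      have "L*\<bar>y-y0\<bar> \<le> L*r" using y L by (intro mult_left_mono) auto
      then have nn: "c - L*\<bar>y-y0\<bar> \<ge> 0" using r by simp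
      have e: "\<bar>y-y0\<bar> = y0 - y" using y by simp
      show ?thesis using nn unfolding e by (simp add: Geq)
    qed
    done
  have J2: "(?f has_integral (B (y0 + r) - B y0)) {y0..y0 + r}"
    apply (rule has_integral_eq[OF _ I2])
    subgoal for y proof -
      assume y: "y \<in> {y0..y0+r}"
      have "L*\<bar>y-y0\<bar> \<le> L*r" using y L by (intro mult_left_mono) auto
      then have nn: "c - L*\<bar>y-y0\<bar> \<ge> 0" using r by simp
      have e: "\<bar>y-y0\<bar> = y - y0" using y by simp
      show ?thesis using nn unfolding e by (simp add: Geq)
    qed
    done
  have J: "(?f has_integral (A y0 - A (y0 - r) + (B (y0 + r) - B y0))) {y0 - r..y0 + r}"
    using r by (intro has_integral_combine[OF _ _ J1 J2]) auto
  have A0: "A y0 = k/(L*real(n+2)) * c^Suc(n+1)" by (simp add: A_def)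
  have A1: "A (y0 - r) = 0" unfolding A_def using r by (simp add: algebra_simps)
  have B0: "B y0 = - k/(L*real(n+2)) * c^Suc(n+1)" by (simp add: B_def)
  have B1: "B (y0 + r) = 0" unfolding B_def using r by (simp add: algebra_simps)
  have f: "fact (Suc n + 1) = real (n+2) * fact (n+1)"
    by (simp add: algebra_simps)
  have val: "A y0 - A (y0 - r) + (B (y0 + r) - B y0) = G (Suc n) L c"
    unfolding A0 A1 B0 B1 G_def k_def f using True L
    by (simp add: field_simps)
  show ?thesis
  proof (rule has_integral_on_superset[OF J[unfolded val]])
    fix y assume "y \<notin> {y0 - r..y0 + r}"
    then have "r \<le> \<bar>y - y0\<bar>" by auto
    then have "L * r \<le> L * \<bar>y - y0\<bar>" using L by (intro mult_left_mono) auto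
    then have "c - L * \<bar>y - y0\<bar> \<le> 0" using r by linarith
    then show "?f y = 0" by (rule G_neg)
  qed auto
qed
lemma G_meas[measurable]: "(\<lambda>x. G n L x) \<in> borel_measurable borel"
  unfolding G_def by measurable

lemma prod_int:
  assumes L: "L > 0" and fin: "finite I"
  shows "(\<integral>\<^sup>+ f. ennreal (c - L * (\<Sum>i\<in>I. \<bar>f i - y0 i\<bar>)) \<partial>(Pi\<^sub>M I (\<lambda>_. lborel)))
         = ennreal (G (card I) L c)"
  using fin
proof (induction I arbitrary: c rule: finite_induct)
  case empty
  have "G 0 L c = max 0 c" by (simp add: G_def max_def)
  then show ?case by (simp add: PiM_empty ennreal_max_0)
next
  case (insert i I c)
  interpret product_sigma_finite "\<lambda>_. lborel"
    by standard
  have "(\<integral>\<^sup>+ f. ennreal (c - L * (\<Sum>j\<in>insert i I. \<bar>f j - y0 j\<bar>)) \<partial>(Pi\<^sub>M (insert i I) (\<lambda>_. lborel)))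
     = (\<integral>\<^sup>+ y. \<integral>\<^sup>+ x. ennreal (c - L * (\<Sum>j\<in>insert i I. \<bar>(x(i := y)) j - y0 j\<bar>)) \<partial>(Pi\<^sub>M I (\<lambda>_. lborel)) \<partial>lborel)"
    using insert.hyps by (intro product_nn_integral_insert_rev) auto
  also have "\<dots> = (\<integral>\<^sup>+ y. \<integral>\<^sup>+ x. ennreal ((c - L * \<bar>y - y0 i\<bar>) - L * (\<Sum>j\<in>I. \<bar>x j - y0 j\<bar>)) \<partial>(Pi\<^sub>M I (\<lambda>_. lborel)) \<partial>lborel)"
  proof (intro nn_integral_cong)
    fix y x
    have "(\<Sum>j\<in>I. \<bar>(x(i := y)) j - y0 j\<bar>) = (\<Sum>j\<in>I. \<bar>x j - y0 j\<bar>)"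
      using insert.hyps by (intro sum.cong) auto
    then show "ennreal (c - L * (\<Sum>j\<in>insert i I. \<bar>(x(i := y)) j - y0 j\<bar>)) =
      ennreal ((c - L * \<bar>y - y0 i\<bar>) - L * (\<Sum>j\<in>I. \<bar>x j - y0 j\<bar>))"
      using insert.hyps by (simp add: algebra_simps)
  qed
  also have "\<dots> = (\<integral>\<^sup>+ y. ennreal (G (card I) L (c - L * \<bar>y - y0 i\<bar>)) \<partial>lborel)"
    by (intro nn_integral_cong insert.IH)
  also have "\<dots> = ennreal (G (Suc (card I)) L c)"
    using L by (intro nn_integral_has_integral_lborel one_dim G_nonneg) measurable
  finally show ?case using insert.hyps by simp
qed


lemma l1_basis: fixes x z :: "real^'n::finite" shows "l1_dist x z = (\<Sum>b\<in>Basis. \<bar>x \<bullet> b - z \<bullet> b\<bar>)"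
proof -
  have B: "(Basis :: (real^'n) set) = (\<lambda>i. axis i 1) ` UNIV"
    by (auto simp: Basis_vec_def)
  have inj: "inj (\<lambda>i::'n::finite. axis i (1::real))"
    by (auto simp: inj_on_def axis_eq_axis)
  show ?thesis unfolding l1_dist_def B sum.reindex[OF inj]
    by (simp add: cart_eq_inner_axis o_def inner_diff_left)
qed

lemma l1_le: "l1_dist x y \<le> real CARD('n::finite) * dist x (y :: real^'n)"
proof -
  have "l1_dist x y \<le> (\<Sum>i\<in>(UNIV::'n set). dist x y)"
    unfolding l1_dist_def dist_norm
    by (intro sum_mono) (metis component_le_norm_cart vector_minus_component)
  then show ?thesis by simp
qed

theorem lemma4:
  fixes p :: "real ^ 'n \<Rightarrow> real" and L :: real
  assumes "L > 0"
    and "prob_density p"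
    and "l1_lipschitz L p"
  shows "\<forall>x. p x \<le> (L ^ CARD('n) * fact (CARD('n) + 1) / 2 ^ CARD('n)) powr (1 / (real CARD('n) + 1))"
proof
  fix x :: "real^'n"
  define K where "K = CARD('n)"
  define a where "a = p x"
  have L: "L > 0" by fact
  have pnn: "\<And>z. p z \<ge> 0" and pint: "(p has_integral 1) UNIV"
    using assms(2) by (auto simp: prob_density_def)
  have lip: "\<And>u v. \<bar>p u - p v\<bar> \<le> L * l1_dist u v"
    using assms(3) by (auto simp: l1_lipschitz_def)
  have a0: "a \<ge> 0" using pnn by (simp add: a_def)
  have "(L * real CARD('n))-lipschitz_on UNIV p"
  proof (rule lipschitz_onI)
    fix u v :: "real^'n"
    have "dist (p u) (p v) \<le> L * l1_dist u v" using lip by (simp add: dist_real_def)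
    also have "\<dots> \<le> L * (real CARD('n) * dist u v)" using L l1_le by (intro mult_left_mono) auto
    finally show "dist (p u) (p v) \<le> L * real CARD('n) * dist u v" by simp
  qed (use L in simp)
  then have pmeas: "p \<in> borel_measurable borel"
    by (intro borel_measurable_continuous_onI lipschitz_on_continuous_on)
  have P1: "(\<integral>\<^sup>+ z. ennreal (p z) \<partial>lborel) = 1"
    using nn_integral_has_integral_lborel[OF pmeas pnn pint] by simp
  have gmeas: "(\<lambda>z. ennreal (a - L * l1_dist x z)) \<in> borel_measurable (lborel :: (real^'n) measure)"
    unfolding l1_dist_def by measurable
  have "(\<integral>\<^sup>+ z. ennreal (a - L * l1_dist x z) \<partial>lborel)
     = (\<integral>\<^sup>+ f. ennreal (a - L * l1_dist x (\<Sum>b\<in>Basis. f b *\<^sub>R b)) \<partial>(\<Pi>\<^sub>M b\<in>Basis. lborel))"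
    using gmeas by (subst lborel_eq) (subst nn_integral_distr; simp)
  also have "\<dots> = (\<integral>\<^sup>+ f. ennreal (a - L * (\<Sum>b\<in>Basis. \<bar>f b - x \<bullet> b\<bar>)) \<partial>(\<Pi>\<^sub>M b\<in>Basis. lborel))"
    by (intro nn_integral_cong) (simp add: l1_basis abs_minus_commute)
  also have "\<dots> = ennreal (G K L a)"
    using L by (subst prod_int) (auto simp: K_def)
  finally have E: "(\<integral>\<^sup>+ z. ennreal (a - L * l1_dist x z) \<partial>lborel) = ennreal (G K L a)" .
  have "(\<integral>\<^sup>+ z. ennreal (a - L * l1_dist x z) \<partial>lborel) \<le> (\<integral>\<^sup>+ z. ennreal (p z) \<partial>lborel)"
  proof (intro nn_integral_mono ennreal_leI)
    fix z
    show "a - L * l1_dist x z \<le> p z" using lip[of x z] unfolding a_def by linarith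
  qed
  then have "ennreal (G K L a) \<le> 1" using E P1 by simp
  then have G1: "G K L a \<le> 1" by (simp add: ennreal_le_1)
  define M where "M = L ^ K * fact (K + 1) / 2 ^ K"
  have "2 ^ K * a ^ (K + 1) / (L ^ K * fact (K + 1)) \<le> 1"
    using G1 a0 by (simp add: G_def max_def)
  moreover have pos: "L ^ K * fact (K + 1) > 0" using L by simp
  ultimately have "2 ^ K * a ^ (K + 1) \<le> L ^ K * fact (K + 1)"
    by (simp add: pos_divide_le_eq)
  then have aM: "a ^ (K + 1) \<le> M"
    unfolding M_def by (simp add: pos_le_divide_eq mult.commute)
  show "p x \<le> (L ^ CARD('n) * fact (CARD('n) + 1) / 2 ^ CARD('n)) powr (1 / (real CARD('n) + 1))"
  proof (cases "a = 0")
    case True then show ?thesis by (simp add: a_def[symmetric])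
  next
    case False
    then have ap: "a > 0" using a0 by simp
    have e1: "a ^ (K + 1) = a powr (real K + 1)"
      using ap powr_realpow[OF ap, of "K+1"] by (simp add: add.commute)
    have e2: "(real K + 1) * (1 / (real K + 1)) = 1" by simp
    have "a = (a ^ (K + 1)) powr (1 / (real K + 1))"
      unfolding e1 powr_powr e2 using ap by simp
    also have "\<dots> \<le> M powr (1 / (real K + 1))"
      using ap aM by (intro powr_mono2) auto
    finally show ?thesis by (simp add: a_def M_def K_def)
  qed
qed

end
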